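(* For any histogram $h$ of a distribution, and any simple learning algorithm, given a faithful set of $n$ samples from the distribution, the total $\ell_1$ error of the algorithm's output is at least $$\Big(\sum_{1\le j<\log^2 n}dev_{j,n}(h,m_{h,j,n})\Big)-O(\log^{-2}n),$$ with the implicit constant independent of $h$, the samples and the algorithm.
   Context: A distribution learner is simple if all domain elements seen exactly $j$ times in the samples are assigned the same probability (for each $j$). $\log$ is natural; $poi(\lambda,j)=e^{-\lambda}\lambda^j/j!$; $h(x)$ is the number of domain elements of probability $x$. Faithful: for an integer $k\ge0$, bucket $k$ consists of histogram entries with probabilities in $(\frac{k}{n\log^2n},\frac{k+1}{n\log^2n}]$, $B_{poi}(j,k)=\sum_{x \text{ in bucket }k, h(x)\neq0}h(x)poi(nx,j)$, $B_S(j,k)$ is the number of domain elements in bucket $k$ seen exactly $j$ times in $S$; a set $S$ of $n$ samples is faithful if (1) each domain element of probability $x$ appears $j$ times with $|nx-j|<\max\{\log^{1.5}n,\sqrt{nx\log^{1.5}n}\}$, and (2) for each $j<\log^2n$ and each $k$, $|B_{poi}(j,k)-B_S(j,k)|<n^{0.6}$. $m_{h,j,n}$ is a median of the multiset with $h(x)$ copies of each $x$, element $x$ weighted by $poi(nx,j)$ (at most half the weight strictly above and at most half strictly below). $dev_{j,n}(h,m)=\sum_{x:h(x)\neq0}|x-m|h(x)poi(nx,j)$. *)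

theory Defs
  imports Complex_Main
begin

definition poi :: "real \<Rightarrow> nat \<Rightarrow> real" where
  "poi lam j = exp (- lam) * lam ^ j / fact j"

definition is_distribution :: "nat set \<Rightarrow> (nat \<Rightarrow> real) \<Rightarrow> bool" where
  "is_distribution D p \<longleftrightarrow> finite D \<and> (\<forall>a\<in>D. p a \<ge> 0) \<and> (\<Sum>a\<in>D. p a) = 1"

definition hist :: "nat set \<Rightarrow> (nat \<Rightarrow> real) \<Rightarrow> real \<Rightarrow> nat" where
  "hist D p x = card {a\<in>D. p a = x}"

definition cnt :: "nat list \<Rightarrow> nat \<Rightarrow> nat" where
  "cnt S a = count_list S a"

text \<open>The set of x with h(x) \<noteq> 0 is exactly the image p ` D.\<close>
definition dev :: "nat set \<Rightarrow> (nat \<Rightarrow> real) \<Rightarrow> nat \<Rightarrow> nat \<Rightarrow> real \<Rightarrow> real" where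
  "dev D p j n m = (\<Sum>x\<in>{x. hist D p x \<noteq> 0}. \<bar>x - m\<bar> * real (hist D p x) * poi (real n * x) j)"

definition is_median :: "nat set \<Rightarrow> (nat \<Rightarrow> real) \<Rightarrow> nat \<Rightarrow> nat \<Rightarrow> real \<Rightarrow> bool" where
  "is_median D p j n m \<longleftrightarrow>
     (let W = (\<Sum>x\<in>{x. hist D p x \<noteq> 0}. real (hist D p x) * poi (real n * x) j) in
       (\<Sum>x\<in>{x. hist D p x \<noteq> 0 \<and> x > m}. real (hist D p x) * poi (real n * x) j) \<le> W / 2 \<and>
       (\<Sum>x\<in>{x. hist D p x \<noteq> 0 \<and> x < m}. real (hist D p x) * poi (real n * x) j) \<le> W / 2)"

definition in_bucket :: "nat \<Rightarrow> nat \<Rightarrow> real \<Rightarrow> bool" where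
  "in_bucket n k x \<longleftrightarrow> real k / (real n * (ln (real n))^2) < x \<and> x \<le> (real k + 1) / (real n * (ln (real n))^2)"

definition B_poi :: "nat set \<Rightarrow> (nat \<Rightarrow> real) \<Rightarrow> nat \<Rightarrow> nat \<Rightarrow> nat \<Rightarrow> real" where
  "B_poi D p n j k = (\<Sum>x\<in>{x. hist D p x \<noteq> 0 \<and> in_bucket n k x}. real (hist D p x) * poi (real n * x) j)"

definition B_S :: "nat set \<Rightarrow> (nat \<Rightarrow> real) \<Rightarrow> nat list \<Rightarrow> nat \<Rightarrow> nat \<Rightarrow> nat" where
  "B_S D p S j k = card {a\<in>D. in_bucket (length S) k (p a) \<and> cnt S a = j}"

definition faithful :: "nat set \<Rightarrow> (nat \<Rightarrow> real) \<Rightarrow> nat \<Rightarrow> nat list \<Rightarrow> bool" where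
  "faithful D p n S \<longleftrightarrow>
     (\<forall>a\<in>D. \<bar>real n * p a - real (cnt S a)\<bar>
              < max ((ln (real n)) powr 1.5) (sqrt (real n * p a * (ln (real n)) powr 1.5))) \<and>
     (\<forall>j k. real j < (ln (real n))^2 \<longrightarrow>
              \<bar>B_poi D p n j k - real (B_S D p S j k)\<bar> < real n powr 0.6)"

definition simple_learner :: "nat set \<Rightarrow> (nat list \<Rightarrow> nat \<Rightarrow> real) \<Rightarrow> bool" where
  "simple_learner D L \<longleftrightarrow> (\<forall>S a b. a \<in> D \<longrightarrow> b \<in> D \<longrightarrow> cnt S a = cnt S b \<longrightarrow> L S a = L S b)"

definition l1_error :: "nat set \<Rightarrow> (nat \<Rightarrow> real) \<Rightarrow> (nat \<Rightarrow> real) \<Rightarrow> real" where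
  "l1_error D p q = (\<Sum>a\<in>D. \<bar>p a - q a\<bar>)"

end

theory Submission
  imports Defs "HOL-Real_Asymp.Real_Asymp"
begin


lemma exp_partial:
  fixes y :: real assumes "y \<ge> 0" "finite J"
  shows "(\<Sum>j\<in>J. y^j / fact j) \<le> exp y"
proof -
  have s: "(\<lambda>n. y^n / fact n) sums exp y"
    using exp_converges[of y] by (simp add: divide_inverse mult.commute scaleR_conv_of_real)
  have "(\<Sum>j\<in>J. y^j / fact j) \<le> (\<Sum>n. y^n / fact n)"
    by (rule sum_le_suminf) (use s assms in \<open>auto simp: sums_iff\<close>)
  then show ?thesis using s by (simp add: sums_iff)
qed

lemma poi_nonneg: "y \<ge> 0 \<Longrightarrow> poi y j \<ge> 0"
  by (simp add: poi_def)

lemma poi_zero: "j \<ge> 1 \<Longrightarrow> poi 0 j = 0"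
  by (simp add: poi_def)

lemma poi_sum:
  fixes y :: real assumes "y \<ge> 0" "finite J" "0 \<notin> J"
  shows "(\<Sum>j\<in>J. poi y j) \<le> y"
proof -
  have "(\<Sum>j\<in>insert 0 J. y^j / fact j) \<le> exp y" using exp_partial assms by blast
  hence 1: "(\<Sum>j\<in>J. y^j / fact j) \<le> exp y - 1" using assms by simp
  have "(\<Sum>j\<in>J. poi y j) = exp (-y) * (\<Sum>j\<in>J. y^j / fact j)"
    by (simp add: poi_def sum_distrib_left)
  also have "\<dots> \<le> exp (-y) * (exp y - 1)" using 1 by (intro mult_left_mono) auto
  also have "\<dots> = 1 - exp (-y)" by (simp add: algebra_simps exp_minus field_simps)
  also have "\<dots> \<le> y" using exp_ge_add_one_self[of "-y"] by simp
  finally show ?thesis .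
qed

lemma poi_tail:
  fixes y M :: real assumes "M \<ge> 0" "y \<ge> 4*M" "real j \<le> M"
  shows "poi y j \<le> exp (-M)"
proof -
  have y0: "y \<ge> 0" using assms by simp
  have "(y/2)^j / fact j \<le> exp (y/2)"
    using exp_partial[of "y/2" "{j}"] y0 by simp
  hence a: "y^j / fact j \<le> 2^j * exp (y/2)"
    by (simp add: power_divide field_simps)
  have "(2::real)^j \<le> exp 1 ^ j"
    using exp_ge_add_one_self[of 1] by (intro power_mono) auto
  also have "\<dots> = exp (real j)" by (simp add: exp_of_nat_mult[symmetric])
  finally have b: "(2::real)^j \<le> exp (real j)" .
  have "poi y j = exp (-y) * (y^j / fact j)" by (simp add: poi_def)
  also have "\<dots> \<le> exp (-y) * (exp (real j) * exp (y/2))"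
    using a b by (intro mult_left_mono order.trans[OF a] mult_right_mono) auto
  also have "\<dots> = exp (real j - y/2)" by (simp add: exp_add[symmetric] exp_diff)
  also have "\<dots> \<le> exp (-M)" using assms by simp
  finally show ?thesis .
qed

lemma sum_splitP:
  fixes f :: "nat \<Rightarrow> real" assumes "finite D"
  shows "(\<Sum>a\<in>D. f a) = (\<Sum>a\<in>{a\<in>D. P a}. f a) + (\<Sum>a\<in>{a\<in>D. \<not> P a}. f a)"
proof -
  have "D = {a\<in>D. P a} \<union> {a\<in>D. \<not> P a}" by auto
  then show ?thesis using assms by (metis (no_types, lifting) sum.union_disjoint disjoint_iff finite_Un mem_Collect_eq)
qed

lemma sum_sign:
  fixes f :: "nat \<Rightarrow> real" assumes "finite D"
  shows "(\<Sum>a\<in>D. f a * (if P a then -1 else 1)) = (\<Sum>a\<in>{a\<in>D. \<not> P a}. f a) - (\<Sum>a\<in>{a\<in>D. P a}. f a)"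
proof -
  have "(\<Sum>a\<in>D. f a * (if P a then -1 else 1)) = (\<Sum>a\<in>{a\<in>D. P a}. f a * (if P a then -1 else 1)) + (\<Sum>a\<in>{a\<in>D. \<not> P a}. f a * (if P a then -1 else 1))"
    by (rule sum_splitP[OF assms])
  also have "\<dots> = - (\<Sum>a\<in>{a\<in>D. P a}. f a) + (\<Sum>a\<in>{a\<in>D. \<not> P a}. f a)"
    by (simp add: sum_negf)
  finally show ?thesis by simp
qed

lemma median_opt:
  fixes w x :: "nat \<Rightarrow> real"
  assumes fin: "finite D" and w0: "\<And>a. a \<in> D \<Longrightarrow> w a \<ge> 0"
    and up: "(\<Sum>a\<in>{a\<in>D. x a > m}. w a) \<le> (\<Sum>a\<in>D. w a) / 2"
    and lo: "(\<Sum>a\<in>{a\<in>D. x a < m}. w a) \<le> (\<Sum>a\<in>D. w a) / 2"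
  shows "(\<Sum>a\<in>D. w a * \<bar>x a - m\<bar>) \<le> (\<Sum>a\<in>D. w a * \<bar>x a - q\<bar>)"
proof (cases "q \<ge> m")
  case True
  define s where "s a = (if x a > m then -1 else (1::real))" for a
  have split: "(\<Sum>a\<in>D. w a) = (\<Sum>a\<in>{a\<in>D. x a > m}. w a) + (\<Sum>a\<in>{a\<in>D. \<not> x a > m}. w a)"
    using fin by (rule sum_splitP)
  have "(\<Sum>a\<in>D. w a * s a) = (\<Sum>a\<in>{a\<in>D. \<not> x a > m}. w a) - (\<Sum>a\<in>{a\<in>D. x a > m}. w a)"
    unfolding s_def using sum_sign[OF fin, of w "\<lambda>a. x a > m"] by simp
  hence sw: "(\<Sum>a\<in>D. w a * s a) \<ge> 0" using up split by linarith
  have pt: "w a * \<bar>x a - q\<bar> \<ge> w a * \<bar>x a - m\<bar> + (q - m) * (w a * s a)" if "a \<in> D" for a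
  proof -
    have "\<bar>x a - q\<bar> \<ge> \<bar>x a - m\<bar> + (q - m) * s a" using True by (auto simp: s_def abs_if)
    from mult_left_mono[OF this w0[OF that]] show ?thesis by (simp add: algebra_simps)
  qed
  have "(\<Sum>a\<in>D. w a * \<bar>x a - m\<bar>) \<le> (\<Sum>a\<in>D. w a * \<bar>x a - m\<bar>) + (q - m) * (\<Sum>a\<in>D. w a * s a)"
    using True sw by simp
  also have "\<dots> = (\<Sum>a\<in>D. w a * \<bar>x a - m\<bar> + (q - m) * (w a * s a))"
    by (simp add: sum.distrib sum_distrib_left)
  also have "\<dots> \<le> (\<Sum>a\<in>D. w a * \<bar>x a - q\<bar>)" by (rule sum_mono) (use pt in auto)
  finally show ?thesis .
next
  case False
  define s where "s a = (if x a < m then -1 else (1::real))" for a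
  have split: "(\<Sum>a\<in>D. w a) = (\<Sum>a\<in>{a\<in>D. x a < m}. w a) + (\<Sum>a\<in>{a\<in>D. \<not> x a < m}. w a)"
    using fin by (rule sum_splitP)
  have "(\<Sum>a\<in>D. w a * s a) = (\<Sum>a\<in>{a\<in>D. \<not> x a < m}. w a) - (\<Sum>a\<in>{a\<in>D. x a < m}. w a)"
    unfolding s_def using sum_sign[OF fin, of w "\<lambda>a. x a < m"] by simp
  hence sw: "(\<Sum>a\<in>D. w a * s a) \<ge> 0" using lo split by linarith
  have pt: "w a * \<bar>x a - q\<bar> \<ge> w a * \<bar>x a - m\<bar> + (m - q) * (w a * s a)" if "a \<in> D" for a
  proof -
    have "\<bar>x a - q\<bar> \<ge> \<bar>x a - m\<bar> + (m - q) * s a" using False by (auto simp: s_def abs_if)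
    from mult_left_mono[OF this w0[OF that]] show ?thesis by (simp add: algebra_simps)
  qed
  have "(\<Sum>a\<in>D. w a * \<bar>x a - m\<bar>) \<le> (\<Sum>a\<in>D. w a * \<bar>x a - m\<bar>) + (m - q) * (\<Sum>a\<in>D. w a * s a)"
    using False sw by simp
  also have "\<dots> = (\<Sum>a\<in>D. w a * \<bar>x a - m\<bar> + (m - q) * (w a * s a))"
    by (simp add: sum.distrib sum_distrib_left)
  also have "\<dots> \<le> (\<Sum>a\<in>D. w a * \<bar>x a - q\<bar>)" by (rule sum_mono) (use pt in auto)
  finally show ?thesis .
qed

lemma hist_sum:
  assumes "finite D"
  shows "(\<Sum>x\<in>{x. hist D p x \<noteq> 0 \<and> P x}. real (hist D p x) * f x) = (\<Sum>a\<in>{a\<in>D. P (p a)}. f (p a))"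
proof -
  have e: "{x. hist D p x \<noteq> 0 \<and> P x} = p ` {a\<in>D. P (p a)}"
    using assms by (auto simp: hist_def card_eq_0_iff)
  have "(\<Sum>a\<in>{a\<in>D. P (p a)}. f (p a)) = (\<Sum>x\<in>p ` {a\<in>D. P (p a)}. \<Sum>a\<in>{b\<in>{a\<in>D. P (p a)}. p b = x}. f (p a))"
    using assms by (intro sum.image_gen) auto
  also have "\<dots> = (\<Sum>x\<in>p ` {a\<in>D. P (p a)}. real (hist D p x) * f x)"
  proof (rule sum.cong[OF refl])
    fix x assume "x \<in> p ` {a\<in>D. P (p a)}"
    then have "{b\<in>{a\<in>D. P (p a)}. p b = x} = {a\<in>D. p a = x}" by auto
    then show "(\<Sum>a\<in>{b\<in>{a\<in>D. P (p a)}. p b = x}. f (p a)) = real (hist D p x) * f x"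
      by (simp add: hist_def)
  qed
  finally show ?thesis using e by simp
qed



definition kb :: "nat \<Rightarrow> real \<Rightarrow> nat" where
  "kb n x = nat (\<lceil>x * (real n * (ln (real n))^2)\<rceil> - 1)"

lemma bucket_iff:
  assumes "real n * (ln (real n))^2 > 0"
  shows "in_bucket n k x \<longleftrightarrow> x > 0 \<and> kb n x = k"
proof -
  define c where "c = real n * (ln (real n))^2"
  have c: "c > 0" using assms c_def by simp
  have "in_bucket n k x \<longleftrightarrow> real k < x * c \<and> x * c \<le> real k + 1"
    unfolding in_bucket_def c_def[symmetric] using c by (simp add: field_simps)
  also have "\<dots> \<longleftrightarrow> \<lceil>x * c\<rceil> = int k + 1"
    by (simp add: ceiling_eq_iff)
  also have "\<dots> \<longleftrightarrow> x > 0 \<and> kb n x = k"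
  proof
    assume h: "\<lceil>x * c\<rceil> = int k + 1"
    hence "0 < \<lceil>x * c\<rceil>" by simp
    hence "x * c > 0" by simp
    hence "x > 0" using c by (simp add: zero_less_mult_iff)
    moreover have "kb n x = k" unfolding kb_def c_def[symmetric] using h by simp
    ultimately show "x > 0 \<and> kb n x = k" by simp
  next
    assume h: "x > 0 \<and> kb n x = k"
    hence "x * c > 0" using c by simp
    hence "\<lceil>x * c\<rceil> \<ge> 1" by simp
    thus "\<lceil>x * c\<rceil> = int k + 1" using h unfolding kb_def c_def[symmetric] by linarith
  qed
  finally show ?thesis .
qed

lemma faith_bound:
  fixes y l :: real
  assumes l1: "l \<ge> 1" and y0: "y \<ge> 0" and j: "real j < l^2"
    and h: "\<bar>y - real j\<bar> < max (l powr 1.5) (sqrt (y * l powr 1.5))"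
  shows "y < 4 * l^2"
proof -
  have t: "l powr 1.5 \<le> l^2"
  proof -
    have "l powr 1.5 \<le> l powr 2" using l1 by (intro powr_mono) auto
    thus ?thesis using l1 by (simp add: powr_realpow)
  qed
  have t0: "l powr 1.5 \<ge> 0" by simp
  show ?thesis
  proof (cases "l powr 1.5 \<ge> sqrt (y * l powr 1.5)")
    case True
    hence "y - real j < l powr 1.5" using h by auto
    moreover have "l^2 > 0" using l1 by simp
    ultimately show ?thesis using t j by linarith
  next
    case False
    hence "y - real j < sqrt (y * l powr 1.5)" using h by auto
    also have "\<dots> \<le> sqrt (y * l^2)" using t y0 by (intro real_sqrt_le_mono mult_left_mono) auto
    also have "\<dots> = sqrt y * l" using l1 y0 by (simp add: real_sqrt_mult)
    finally have a: "y < l^2 + sqrt y * l" using j by linarith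
    have sy: "(sqrt y)^2 = y" using y0 by simp
    show ?thesis
    proof (rule ccontr)
      assume "\<not> y < 4 * l^2"
      hence "(sqrt y)^2 \<ge> (2*l)^2" using sy by (simp add: power_mult_distrib)
      hence s2: "sqrt y \<ge> 2*l" by (rule power2_le_imp_le) (use y0 in auto)
      have "sqrt y * sqrt y \<ge> (2*l) * sqrt y" using s2 y0 by (intro mult_right_mono) auto
      moreover have "l * sqrt y \<ge> l * (2*l)" using s2 l1 by (intro mult_left_mono) auto
      moreover have "sqrt y * sqrt y = y" using y0 by simp
      moreover have "l^2 = l * l" by (simp add: power2_eq_square)
      moreover have "l * l > 0" using l1 by simp
      ultimately show False using a by (simp add: algebra_simps)
    qed
  qed
qed

lemma group_sum:
  fixes f h :: "nat \<Rightarrow> real"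
  assumes "finite A" "\<And>a. a \<in> A \<Longrightarrow> g a < K"
  shows "(\<Sum>a\<in>A. f a * h (g a)) = (\<Sum>k<K. (\<Sum>a\<in>{a\<in>A. g a = k}. f a) * h k)"
proof -
  have "(\<Sum>a\<in>A. f a * h (g a)) = (\<Sum>k<K. \<Sum>a\<in>{a\<in>A. g a = k}. f a * h (g a))"
    using assms by (intro sum.group[symmetric]) auto
  also have "\<dots> = (\<Sum>k<K. (\<Sum>a\<in>{a\<in>A. g a = k}. f a) * h k)"
    by (intro sum.cong refl) (simp add: sum_distrib_right)
  finally show ?thesis .
qed



lemma per_j:
  fixes D :: "nat set" and p :: "nat \<Rightarrow> real" and S :: "nat list" and L and n j :: nat and m :: real
  assumes dist: "is_distribution D p" and len: "length S = n" and sub: "set S \<subseteq> {a\<in>D. p a > 0}"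
    and faith: "faithful D p n S" and simpL: "simple_learner D L" and med: "is_median D p j n m"
    and j1: "1 \<le> j" and jl: "real j < (ln (real n))^2" and l1: "ln (real n) \<ge> 1"
  shows "dev D p j n m \<le> (\<Sum>a\<in>{a\<in>D. cnt S a = j}. \<bar>p a - L S a\<bar>)
     + (\<Sum>a\<in>D. poi (real n * p a) j) / (real n * (ln (real n))^2)
     + real (card {a\<in>D. cnt S a = j}) / (real n * (ln (real n))^2)
     + real (nat \<lceil>4 * ln (real n)^4\<rceil>) * real n powr 0.6 * (2 * (real (nat \<lceil>4 * ln (real n)^4\<rceil>) / (real n * (ln (real n))^2)))
     + exp (- ((ln (real n))^2))"
proof -
  define l where "l = ln (real n)"
  define c where "c = real n * l^2"
  define K where "K = nat \<lceil>4 * l^4\<rceil>"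
  define X where "X = real K / c"
  define w where "w a = poi (real n * p a) j" for a
  define Sj where "Sj = {a\<in>D. cnt S a = j}"
  have l1': "l \<ge> 1" using l1 l_def by simp
  have n0: "real n > 0"
  proof (rule ccontr)
    assume "\<not> real n > 0" hence "n = 0" by simp
    thus False using l1 by simp
  qed
  have "0 < ln (real n)" using l1 by linarith
  hence n1: "real n > 1" using n0 by (rule ln_gt_zero_imp_gt_one)
  have c0: "c > 0" using n1 l1' by (simp add: c_def)
  have cpos: "real n * (ln (real n))^2 > 0" using c0 c_def l_def by simp
  have finD: "finite D" and p0: "\<And>a. a \<in> D \<Longrightarrow> p a \<ge> 0" and sum1: "(\<Sum>a\<in>D. p a) = 1"
    using dist by (auto simp: is_distribution_def)
  have w0: "\<And>a. a \<in> D \<Longrightarrow> w a \<ge> 0" unfolding w_def using p0 n1 by (intro poi_nonneg) simp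
  have K4: "real K \<ge> 4 * l^4"
  proof -
    have "0 \<le> 4 * l^4" by simp
    hence "\<lceil>(0::real)\<rceil> \<le> \<lceil>4 * l^4\<rceil>" by (rule ceiling_mono)
    hence "\<lceil>4 * l^4\<rceil> \<ge> 0" by simp
    hence "real K = real_of_int \<lceil>4 * l^4\<rceil>" unfolding K_def by simp
    thus ?thesis using le_of_int_ceiling[of "4 * l^4"] by simp
  qed
  have X0: "X \<ge> 0" using c0 by (simp add: X_def)
  have bk: "in_bucket n (kb n x) x" if "x > 0" for x
    using bucket_iff[OF cpos] that by simp
  have bk_lo: "real (kb n x) / c < x" and bk_hi: "x \<le> (real (kb n x) + 1) / c" if "x > 0" for x
    using bk[OF that] unfolding in_bucket_def c_def l_def by auto
  have Sj_prop: "p a > 0 \<and> p a < X \<and> kb n (p a) < K" if "a \<in> Sj" for a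
  proof -
    have aD: "a \<in> D" and ca: "cnt S a = j" using that by (auto simp: Sj_def)
    have "a \<in> set S" using ca j1 count_list_0_iff[of S a] by (simp add: cnt_def)
    hence pa: "p a > 0" using sub by auto
    have "\<bar>real n * p a - real (cnt S a)\<bar> < max (l powr 1.5) (sqrt (real n * p a * l powr 1.5))"
      using faith aD by (simp add: faithful_def l_def)
    hence "real n * p a < 4 * l^2"
      using faith_bound[OF l1' _ _, of "real n * p a" j] ca jl pa n1 by (simp add: l_def)
    hence "p a < 4 * l^2 / real n" using n1 by (simp add: field_simps)
    also have "4 * l^2 / real n = 4 * l^4 / c" using l1' n1 by (simp add: c_def field_simps power2_eq_square power4_eq_xxxx)
    also have "\<dots> \<le> X" unfolding X_def using K4 c0 by (simp add: divide_right_mono)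
    finally have pX: "p a < X" .
    have "real (kb n (p a)) / c < real K / c" using bk_lo[OF pa] pX X_def by simp
    hence "kb n (p a) < K" using c0 by (simp add: divide_less_cancel)
    thus ?thesis using pa pX by simp
  qed
  define q0 where "q0 = L S (SOME a. a \<in> Sj)"
  define q where "q = max 0 (min X q0)"
  have q0X: "0 \<le> q" "q \<le> X" using X0 by (auto simp: q_def)
  have Lq0: "L S a = q0" if "a \<in> Sj" for a
  proof -
    have s: "(SOME a. a \<in> Sj) \<in> Sj" using that by (rule someI)
    show ?thesis using simpL that s unfolding simple_learner_def q0_def Sj_def by auto
  qed
  have E_ge: "(\<Sum>a\<in>Sj. \<bar>p a - q\<bar>) \<le> (\<Sum>a\<in>Sj. \<bar>p a - L S a\<bar>)"
  proof (rule sum_mono)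
    fix a assume a: "a \<in> Sj"
    have "0 \<le> p a" "p a \<le> X" using Sj_prop[OF a] by auto
    thus "\<bar>p a - q\<bar> \<le> \<bar>p a - L S a\<bar>" using Lq0[OF a] by (auto simp: q_def abs_if)
  qed
  have dev_el: "dev D p j n m = (\<Sum>a\<in>D. w a * \<bar>p a - m\<bar>)"
  proof -
    have "dev D p j n m = (\<Sum>x\<in>{x. hist D p x \<noteq> 0 \<and> True}. real (hist D p x) * (poi (real n * x) j * \<bar>x - m\<bar>))"
      by (simp add: dev_def mult_ac)
    also have "\<dots> = (\<Sum>a\<in>{a\<in>D. True}. poi (real n * p a) j * \<bar>p a - m\<bar>)"
      by (rule hist_sum[OF finD])
    finally show ?thesis by (simp add: w_def)
  qed
  have medW: "(\<Sum>x\<in>{x. hist D p x \<noteq> 0}. real (hist D p x) * poi (real n * x) j) = (\<Sum>a\<in>D. w a)"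
    using hist_sum[OF finD, of p "\<lambda>x. poi (real n * x) j" "\<lambda>_. True"] by (simp add: w_def)
  have medU: "(\<Sum>x\<in>{x. hist D p x \<noteq> 0 \<and> x > m}. real (hist D p x) * poi (real n * x) j) = (\<Sum>a\<in>{a\<in>D. p a > m}. w a)"
    using hist_sum[OF finD, of p "\<lambda>x. poi (real n * x) j" "\<lambda>x. x > m"] by (simp add: w_def)
  have medL: "(\<Sum>x\<in>{x. hist D p x \<noteq> 0 \<and> x < m}. real (hist D p x) * poi (real n * x) j) = (\<Sum>a\<in>{a\<in>D. p a < m}. w a)"
    using hist_sum[OF finD, of p "\<lambda>x. poi (real n * x) j" "\<lambda>x. x < m"] by (simp add: w_def)
  have dev_q: "dev D p j n m \<le> (\<Sum>a\<in>D. w a * \<bar>p a - q\<bar>)"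
    unfolding dev_el
  proof (rule median_opt[OF finD w0])
    have "(\<Sum>x\<in>{x. hist D p x \<noteq> 0 \<and> x > m}. real (hist D p x) * poi (real n * x) j) \<le> (\<Sum>x\<in>{x. hist D p x \<noteq> 0}. real (hist D p x) * poi (real n * x) j) / 2
      \<and> (\<Sum>x\<in>{x. hist D p x \<noteq> 0 \<and> x < m}. real (hist D p x) * poi (real n * x) j) \<le> (\<Sum>x\<in>{x. hist D p x \<noteq> 0}. real (hist D p x) * poi (real n * x) j) / 2"
      using med unfolding is_median_def Let_def .
    thus "(\<Sum>a\<in>{a\<in>D. p a > m}. w a) \<le> (\<Sum>a\<in>D. w a) / 2" "(\<Sum>a\<in>{a\<in>D. p a < m}. w a) \<le> (\<Sum>a\<in>D. w a) / 2"
      unfolding medW medU medL by auto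
  qed
  define A1 where "A1 = {a\<in>D. p a > 0 \<and> kb n (p a) < K}"
  define A2 where "A2 = {a\<in>D. \<not> (p a > 0 \<and> kb n (p a) < K)}"
  define h where "h k = \<bar>(real k + 1) / c - q\<bar>" for k :: nat
  have finA1: "finite A1" and A1D: "A1 \<subseteq> D" using finD by (auto simp: A1_def)
  have finA2: "finite A2" and A2D: "A2 \<subseteq> D" using finD by (auto simp: A2_def)
  have finSj: "finite Sj" using finD by (auto simp: Sj_def)
  have splitD: "(\<Sum>a\<in>D. w a * \<bar>p a - q\<bar>) = (\<Sum>a\<in>A1. w a * \<bar>p a - q\<bar>) + (\<Sum>a\<in>A2. w a * \<bar>p a - q\<bar>)"
    unfolding A1_def A2_def by (rule sum_splitP[OF finD])
  have tail: "(\<Sum>a\<in>A2. w a * \<bar>p a - q\<bar>) \<le> exp (- (l^2))"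
  proof -
    have "(\<Sum>a\<in>A2. w a * \<bar>p a - q\<bar>) \<le> (\<Sum>a\<in>A2. exp (- (l^2)) * p a)"
    proof (rule sum_mono)
      fix a assume a: "a \<in> A2"
      hence aD: "a \<in> D" and nb: "\<not> (p a > 0 \<and> kb n (p a) < K)" by (auto simp: A2_def)
      show "w a * \<bar>p a - q\<bar> \<le> exp (- (l^2)) * p a"
      proof (cases "p a > 0")
        case False
        hence "p a = 0" using p0[OF aD] by simp
        thus ?thesis using j1 by (simp add: w_def poi_zero)
      next
        case True
        hence kK: "K \<le> kb n (p a)" using nb by simp
        have "X \<le> real (kb n (p a)) / c" unfolding X_def using kK c0 by (simp add: divide_right_mono)
        hence Xp: "X < p a" using bk_lo[OF True] by simp
        have l2: "l^2 > 0" using l1' by simp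
        have "4 * l^2 = 4 * l^4 / l^2" using l2 by (simp add: field_simps power2_eq_square power4_eq_xxxx)
        also have "\<dots> \<le> real K / l^2" using K4 l2 by (simp add: divide_right_mono)
        also have "real K / l^2 = real n * X" unfolding X_def c_def using n0 l2 by (simp add: field_simps)
        also have "\<dots> \<le> real n * p a" using Xp n0 by simp
        finally have ny: "4 * l^2 \<le> real n * p a" .
        have wb: "w a \<le> exp (- (l^2))" unfolding w_def
          by (rule poi_tail) (use ny jl l_def in auto)
        have ab: "\<bar>p a - q\<bar> \<le> p a" using q0X Xp by simp
        show ?thesis using mult_mono[OF wb ab] w0[OF aD] by simp
      qed
    qed
    also have "\<dots> = exp (- (l^2)) * (\<Sum>a\<in>A2. p a)" by (simp add: sum_distrib_left)
    also have "\<dots> \<le> exp (- (l^2)) * 1"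
    proof -
      have "(\<Sum>a\<in>A2. p a) \<le> (\<Sum>a\<in>D. p a)" using finD A2D p0 by (intro sum_mono2) auto
      thus ?thesis using sum1 by simp
    qed
    finally show ?thesis by simp
  qed
  have rbnd: "\<bar>p a - (real (kb n (p a)) + 1) / c\<bar> \<le> 1 / c" if "p a > 0" for a
  proof -
    have "real (kb n (p a)) / c < p a" "p a \<le> (real (kb n (p a)) + 1) / c" using bk_lo bk_hi that by auto
    thus ?thesis using c0 by (simp add: add_divide_distrib abs_if)
  qed
  have A1pt: "w a * \<bar>p a - q\<bar> \<le> w a * h (kb n (p a)) + w a / c" if a: "a \<in> A1" for a
  proof -
    have "\<bar>p a - q\<bar> \<le> h (kb n (p a)) + 1 / c" using rbnd[of a] a unfolding h_def A1_def by auto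
    from mult_left_mono[OF this w0] a A1D show ?thesis by (auto simp: algebra_simps)
  qed
  have part1: "(\<Sum>a\<in>A1. w a * \<bar>p a - q\<bar>) \<le> (\<Sum>a\<in>A1. w a * h (kb n (p a))) + (\<Sum>a\<in>D. w a) / c"
  proof -
    have "(\<Sum>a\<in>A1. w a * \<bar>p a - q\<bar>) \<le> (\<Sum>a\<in>A1. w a * h (kb n (p a)) + w a / c)"
      by (rule sum_mono) (rule A1pt)
    also have "\<dots> = (\<Sum>a\<in>A1. w a * h (kb n (p a))) + (\<Sum>a\<in>A1. w a) / c"
      by (simp add: sum.distrib sum_divide_distrib)
    also have "(\<Sum>a\<in>A1. w a) \<le> (\<Sum>a\<in>D. w a)" using finD A1D w0 by (intro sum_mono2) auto
    hence "(\<Sum>a\<in>A1. w a) / c \<le> (\<Sum>a\<in>D. w a) / c" using c0 by (simp add: divide_right_mono)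
    finally show ?thesis by simp
  qed
  have group1: "(\<Sum>a\<in>A1. w a * h (kb n (p a))) = (\<Sum>k<K. B_poi D p n j k * h k)"
  proof -
    have "(\<Sum>a\<in>A1. w a * h (kb n (p a))) = (\<Sum>k<K. (\<Sum>a\<in>{a\<in>A1. kb n (p a) = k}. w a) * h k)"
      by (rule group_sum[OF finA1]) (auto simp: A1_def)
    also have "\<dots> = (\<Sum>k<K. B_poi D p n j k * h k)"
    proof (rule sum.cong[OF refl])
      fix k assume k: "k \<in> {..<K}"
      have e: "{a\<in>A1. kb n (p a) = k} = {a\<in>D. in_bucket n k (p a)}"
        using k bucket_iff[OF cpos] by (auto simp: A1_def)
      have "B_poi D p n j k = (\<Sum>a\<in>{a\<in>D. in_bucket n k (p a)}. poi (real n * p a) j)"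
        unfolding B_poi_def by (rule hist_sum[OF finD])
      thus "(\<Sum>a\<in>{a\<in>A1. kb n (p a) = k}. w a) * h k = B_poi D p n j k * h k"
        using e by (simp add: w_def)
    qed
    finally show ?thesis .
  qed
  have group2: "(\<Sum>a\<in>Sj. 1 * h (kb n (p a))) = (\<Sum>k<K. real (B_S D p S j k) * h k)"
  proof -
    have "(\<Sum>a\<in>Sj. 1 * h (kb n (p a))) = (\<Sum>k<K. (\<Sum>a\<in>{a\<in>Sj. kb n (p a) = k}. 1) * h k)"
      by (rule group_sum[OF finSj]) (use Sj_prop in auto)
    also have "\<dots> = (\<Sum>k<K. real (B_S D p S j k) * h k)"
    proof (rule sum.cong[OF refl])
      fix k assume k: "k \<in> {..<K}"
      have e: "{a\<in>Sj. kb n (p a) = k} = {a\<in>D. in_bucket (length S) k (p a) \<and> cnt S a = j}"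
        using Sj_prop bucket_iff[OF cpos] len by (auto simp: Sj_def)
      show "(\<Sum>a\<in>{a\<in>Sj. kb n (p a) = k}. 1) * h k = real (B_S D p S j k) * h k"
        unfolding B_S_def e by simp
    qed
    finally show ?thesis .
  qed
  have hk: "0 \<le> h k \<and> h k \<le> 2 * X" if "k < K" for k
  proof -
    have "real k + 1 \<le> real K" using that by simp
    hence "(real k + 1) / c \<le> X" unfolding X_def using c0 by (simp add: divide_right_mono)
    moreover have "(real k + 1) / c \<ge> 0" using c0 by simp
    ultimately show ?thesis using q0X unfolding h_def by (simp add: abs_if)
  qed
  have fB: "B_poi D p n j k \<le> real (B_S D p S j k) + real n powr 0.6" for k
  proof -
    have "\<bar>B_poi D p n j k - real (B_S D p S j k)\<bar> < real n powr 0.6"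
      using faith jl unfolding faithful_def by blast
    thus ?thesis by linarith
  qed
  have part2: "(\<Sum>k<K. B_poi D p n j k * h k) \<le> (\<Sum>k<K. real (B_S D p S j k) * h k) + real K * real n powr 0.6 * (2 * X)"
  proof -
    have "(\<Sum>k<K. B_poi D p n j k * h k) \<le> (\<Sum>k<K. real (B_S D p S j k) * h k + real n powr 0.6 * (2 * X))"
    proof (rule sum_mono)
      fix k assume "k \<in> {..<K}"
      hence hk': "0 \<le> h k" "h k \<le> 2 * X" using hk by auto
      have "B_poi D p n j k * h k \<le> (real (B_S D p S j k) + real n powr 0.6) * h k"
        using fB hk' by (intro mult_right_mono) auto
      also have "\<dots> = real (B_S D p S j k) * h k + real n powr 0.6 * h k" by (simp add: algebra_simps)
      also have "\<dots> \<le> real (B_S D p S j k) * h k + real n powr 0.6 * (2 * X)"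
        using hk' by (intro add_left_mono mult_left_mono) auto
      finally show "B_poi D p n j k * h k \<le> real (B_S D p S j k) * h k + real n powr 0.6 * (2 * X)" .
    qed
    also have "\<dots> = (\<Sum>k<K. real (B_S D p S j k) * h k) + real K * real n powr 0.6 * (2 * X)"
      by (simp add: sum.distrib)
    finally show ?thesis .
  qed
  have part3: "(\<Sum>a\<in>Sj. 1 * h (kb n (p a))) \<le> (\<Sum>a\<in>Sj. \<bar>p a - q\<bar>) + real (card Sj) / c"
  proof -
    have "(\<Sum>a\<in>Sj. 1 * h (kb n (p a))) \<le> (\<Sum>a\<in>Sj. \<bar>p a - q\<bar> + 1 / c)"
    proof (rule sum_mono)
      fix a assume "a \<in> Sj"
      hence "p a > 0" using Sj_prop by auto
      from rbnd[OF this] show "1 * h (kb n (p a)) \<le> \<bar>p a - q\<bar> + 1 / c" unfolding h_def by simp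
    qed
    also have "\<dots> = (\<Sum>a\<in>Sj. \<bar>p a - q\<bar>) + real (card Sj) / c" by (simp add: sum.distrib)
    finally show ?thesis .
  qed
  have fin: "dev D p j n m \<le> (\<Sum>a\<in>Sj. \<bar>p a - L S a\<bar>) + (\<Sum>a\<in>D. w a) / c + real (card Sj) / c
      + real K * real n powr 0.6 * (2 * X) + exp (- (l^2))"
    using dev_q splitD tail part1 group1 group2 part2 part3 E_ge by linarith
  thus ?thesis unfolding Sj_def w_def X_def K_def c_def l_def .
qed


lemma asymp_bound:
  "\<exists>N. \<forall>n\<ge>N. ln (real n) \<ge> 1 \<and>
     ((ln (real n))^2 + 1) * (50 * (ln (real n))^6 * real n powr 0.6 / real n + 1 / real n) \<le> 1 / (ln (real n))^2"
proof -
  have "eventually (\<lambda>n::nat. ln (real n) \<ge> 1 \<and>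
     ((ln (real n))^2 + 1) * (50 * (ln (real n))^6 * real n powr 0.6 / real n + 1 / real n) \<le> 1 / (ln (real n))^2) at_top"
    by (intro eventually_conj; real_asymp)
  thus ?thesis by (simp add: eventually_at_top_linorder)
qed

theorem corollary4:
  shows "\<exists>C N. \<forall>n \<ge> N. \<forall>(D::nat set) p S L m.
     is_distribution D p \<longrightarrow> length S = n \<longrightarrow> set S \<subseteq> {a\<in>D. p a > 0} \<longrightarrow>
     faithful D p n S \<longrightarrow> simple_learner D L \<longrightarrow>
     (\<forall>j. is_median D p j n (m j)) \<longrightarrow>
     l1_error D p (L S) \<ge>
       (\<Sum>j\<in>{j. 1 \<le> j \<and> real j < (ln (real n))^2}. dev D p j n (m j)) - C / (ln (real n))^2"
proof -
  obtain N where HN: "\<And>n. n \<ge> N \<Longrightarrow> ln (real n) \<ge> 1 \<and>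
     ((ln (real n))^2 + 1) * (50 * (ln (real n))^6 * real n powr 0.6 / real n + 1 / real n) \<le> 1 / (ln (real n))^2"
    using asymp_bound by blast
  have main: "l1_error D p (L S) \<ge> (\<Sum>j\<in>{j. 1 \<le> j \<and> real j < (ln (real n))^2}. dev D p j n (m j)) - 3 / (ln (real n))^2"
    if nN: "n \<ge> N" and dist: "is_distribution D p" and len: "length S = n"
      and sub: "set S \<subseteq> {a\<in>D. p a > 0}" and faith: "faithful D p n S" and simpL: "simple_learner D L"
      and med: "\<forall>j. is_median D p j n (m j)"
    for n :: nat and D :: "nat set" and p :: "nat \<Rightarrow> real" and S :: "nat list" and L :: "nat list \<Rightarrow> nat \<Rightarrow> real" and m :: "nat \<Rightarrow> real"
  proof -
    define l where "l = ln (real n)"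
    define c where "c = real n * l^2"
    define K where "K = nat \<lceil>4 * l^4\<rceil>"
    define J where "J = {j. 1 \<le> j \<and> real j < l^2}"
    define Sj where "Sj j = {a\<in>D. cnt S a = j}" for j
    define Q where "Q = real K * real n powr 0.6 * (2 * (real K / c)) + exp (- (l^2))"
    have l1: "l \<ge> 1" and asy: "(l^2 + 1) * (50 * l^6 * real n powr 0.6 / real n + 1 / real n) \<le> 1 / l^2"
      using HN[OF nN] by (auto simp: l_def)
    have n0: "real n > 0"
    proof (rule ccontr)
      assume "\<not> real n > 0" hence "n = 0" by simp
      thus False using l1 l_def by simp
    qed
    have l2: "l^2 > 0" using l1 by simp
    have c0: "c > 0" using n0 l2 by (simp add: c_def)
    have finD: "finite D" and p0: "\<And>a. a \<in> D \<Longrightarrow> p a \<ge> 0" and sum1: "(\<Sum>a\<in>D. p a) = 1"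
      using dist by (auto simp: is_distribution_def)
    have finJ: "finite J"
    proof (rule finite_subset)
      show "J \<subseteq> {..nat \<lceil>l^2\<rceil>}" unfolding J_def by (auto, linarith)
    qed simp
    have cardJ: "real (card J) \<le> l^2 + 1"
    proof -
      have "J \<subseteq> {1..nat \<lceil>l^2\<rceil>}" unfolding J_def by (auto, linarith)
      hence "card J \<le> nat \<lceil>l^2\<rceil>" using card_mono[of "{1..nat \<lceil>l^2\<rceil>}" J] by simp
      hence "real (card J) \<le> real (nat \<lceil>l^2\<rceil>)" by (simp only: of_nat_le_iff)
      also have "real (nat \<lceil>l^2\<rceil>) = real_of_int \<lceil>l^2\<rceil>" using l2 by simp
      also have "\<dots> \<le> l^2 + 1" by linarith
      finally show ?thesis .
    qed
    have perj: "dev D p j n (m j) \<le> (\<Sum>a\<in>Sj j. \<bar>p a - L S a\<bar>) + (\<Sum>a\<in>D. poi (real n * p a) j) / c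
         + real (card (Sj j)) / c + Q" if "j \<in> J" for j
      using per_j[OF dist len sub faith simpL med[rule_format, of j]] that l1
      unfolding J_def Sj_def Q_def c_def K_def l_def by auto
    have "(\<Sum>j\<in>J. dev D p j n (m j)) \<le> (\<Sum>j\<in>J. (\<Sum>a\<in>Sj j. \<bar>p a - L S a\<bar>) + (\<Sum>a\<in>D. poi (real n * p a) j) / c
         + real (card (Sj j)) / c + Q)"
      by (rule sum_mono) (rule perj)
    also have "\<dots> = (\<Sum>j\<in>J. \<Sum>a\<in>Sj j. \<bar>p a - L S a\<bar>) + (\<Sum>j\<in>J. \<Sum>a\<in>D. poi (real n * p a) j) / c
         + (\<Sum>j\<in>J. real (card (Sj j))) / c + real (card J) * Q"
      by (simp add: sum.distrib sum_divide_distrib)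
    finally have S1: "(\<Sum>j\<in>J. dev D p j n (m j)) \<le> (\<Sum>j\<in>J. \<Sum>a\<in>Sj j. \<bar>p a - L S a\<bar>) + (\<Sum>j\<in>J. \<Sum>a\<in>D. poi (real n * p a) j) / c
         + (\<Sum>j\<in>J. real (card (Sj j))) / c + real (card J) * Q" .
    define U where "U = {a\<in>D. cnt S a \<in> J}"
    have finU: "finite U" using finD by (simp add: U_def)
    have grp: "(\<Sum>j\<in>J. \<Sum>a\<in>Sj j. f a) = (\<Sum>a\<in>U. f a)" for f :: "nat \<Rightarrow> real"
    proof -
      have "(\<Sum>j\<in>J. \<Sum>a\<in>{a\<in>U. cnt S a = j}. f a) = (\<Sum>a\<in>U. f a)"
        by (rule sum.group[OF finU finJ]) (auto simp: U_def)
      moreover have "{a\<in>U. cnt S a = j} = Sj j" if "j \<in> J" for j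
        using that by (auto simp: U_def Sj_def)
      ultimately show ?thesis by simp
    qed
    have E1: "(\<Sum>j\<in>J. \<Sum>a\<in>Sj j. \<bar>p a - L S a\<bar>) \<le> l1_error D p (L S)"
      unfolding grp l1_error_def U_def using finD by (intro sum_mono2) auto
    have US: "U \<subseteq> set S"
    proof
      fix a assume "a \<in> U"
      hence "cnt S a \<ge> 1" by (auto simp: U_def J_def)
      thus "a \<in> set S" using count_list_0_iff[of S a] by (simp add: cnt_def)
    qed
    have E2: "(\<Sum>j\<in>J. real (card (Sj j))) \<le> real n"
    proof -
      have "(\<Sum>j\<in>J. real (card (Sj j))) = (\<Sum>j\<in>J. \<Sum>a\<in>Sj j. 1)" by simp
      also have "\<dots> = real (card U)" unfolding grp by simp
      also have "card U \<le> card (set S)" using US by (intro card_mono) auto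
      hence "real (card U) \<le> real (length S)" using card_length[of S] by linarith
      finally show ?thesis using len by simp
    qed
    have E3: "(\<Sum>j\<in>J. \<Sum>a\<in>D. poi (real n * p a) j) \<le> real n"
    proof -
      have "(\<Sum>j\<in>J. \<Sum>a\<in>D. poi (real n * p a) j) = (\<Sum>a\<in>D. \<Sum>j\<in>J. poi (real n * p a) j)"
        by (rule sum.swap)
      also have "\<dots> \<le> (\<Sum>a\<in>D. real n * p a)"
        by (rule sum_mono, rule poi_sum) (use finJ p0 n0 in \<open>auto simp: J_def\<close>)
      also have "\<dots> = real n" using sum1 by (simp add: sum_distrib_left[symmetric])
      finally show ?thesis .
    qed
    have nc: "real n / c = 1 / l^2" using n0 by (simp add: c_def)
    have E4: "real (card J) * Q \<le> 1 / l^2"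
    proof -
      have K5: "real K \<le> 5 * l^4"
      proof -
        have "0 \<le> 4 * l^4" by simp
        hence "\<lceil>(0::real)\<rceil> \<le> \<lceil>4 * l^4\<rceil>" by (rule ceiling_mono)
        hence "real K = real_of_int \<lceil>4 * l^4\<rceil>" unfolding K_def by simp
        hence "real K \<le> 4 * l^4 + 1" using of_int_ceiling_le_add_one[of "4 * l^4"] by simp
        moreover have "l^4 \<ge> 1" using l1 by simp
        ultimately show ?thesis by linarith
      qed
      have K0: "real K \<ge> 0" by simp
      have "real K * real K \<le> (5 * l^4) * (5 * l^4)" using K5 K0 by (intro mult_mono) auto
      hence KK: "real K * real K \<le> 25 * l^8" by (simp add: power_mult_distrib algebra_simps flip: power_add)
      have "real K * real n powr 0.6 * (2 * (real K / c)) = 2 * (real K * real K) * real n powr 0.6 / c"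
        by (simp add: field_simps)
      also have "\<dots> \<le> 2 * (25 * l^8) * real n powr 0.6 / c"
        using KK c0 by (intro divide_right_mono mult_right_mono mult_left_mono) auto
      also have "\<dots> = 50 * l^6 * real n powr 0.6 / real n"
      proof -
        have e8: "l^8 = l^6 * l^2" by (simp flip: power_add)
        show ?thesis using l2 n0 unfolding c_def e8 by (simp add: field_simps)
      qed
      finally have q1: "real K * real n powr 0.6 * (2 * (real K / c)) \<le> 50 * l^6 * real n powr 0.6 / real n" .
      have "exp (- (l^2)) \<le> exp (- l)" using l1 by (simp add: power2_eq_square)
      also have "exp (- l) = 1 / real n" using n0 by (simp add: l_def exp_minus inverse_eq_divide)
      finally have q2: "exp (- (l^2)) \<le> 1 / real n" .
      have Q0: "Q \<ge> 0" unfolding Q_def using c0 by simp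
      have "real (card J) * Q \<le> (l^2 + 1) * Q" using cardJ Q0 by (intro mult_right_mono) auto
      also have "\<dots> \<le> (l^2 + 1) * (50 * l^6 * real n powr 0.6 / real n + 1 / real n)"
        using q1 q2 l2 unfolding Q_def by (intro mult_left_mono) auto
      also have "\<dots> \<le> 1 / l^2" by (rule asy)
      finally show ?thesis .
    qed
    have "(\<Sum>j\<in>J. dev D p j n (m j)) \<le> l1_error D p (L S) + 3 / l^2"
    proof -
      have a: "(\<Sum>j\<in>J. \<Sum>a\<in>D. poi (real n * p a) j) / c \<le> 1 / l^2"
        using E3 c0 nc by (metis divide_right_mono order_less_imp_le)
      have b: "(\<Sum>j\<in>J. real (card (Sj j))) / c \<le> 1 / l^2"
        using E2 c0 nc by (metis divide_right_mono order_less_imp_le)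
      show ?thesis using S1 E1 a b E4 by linarith
    qed
    thus ?thesis unfolding J_def l_def by linarith
  qed
  show ?thesis by (intro exI[of _ 3] exI[of _ N] allI impI) (rule main; assumption)
qed

end
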